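(* Let $P$ be a finite set of points in $\mathbb{R}^m$, let $(A,B)$ be an optimal 2-means partition of $P$, let $S\subseteq A$ be the set of low-revenue points of $A$, assume $S\ne\emptyset$, and let $x\in\arg\max_{u\in S}d(u,\rho(A))$. Then for every $u\in S$, $d(u,\rho(B))\le\frac{11}{9}d(x,\rho(A))$.
   Context: Distances are Euclidean: $d(x,y)=\|x-y\|_2$. For finite nonempty $S$, $\rho(S)=\frac{1}{|S|}\sum_{u\in S}u$ and $\Delta_1(S)=\sum_{u\in S}d(u,\rho(S))^2$. A partition $(A,B)$ of $P$ into two nonempty sets is an optimal 2-means partition if it minimizes $\Delta_1(A)+\Delta_1(B)$ among all partitions of $P$ into two nonempty sets. For $i\in A$, $j\in B$, $rev(i,j)=\min\{d(i,j)/\max\{d(i,\rho(A)),d(j,\rho(B))\},\,1\}$ (equal to $1$ if the maximum is $0$). For $u\in A$, $HR_B(u)=\{v\in B: rev(u,v)\ge\frac{1}{10}\}$. A point $u\in A$ is a high-revenue point if $|HR_B(u)|\ge\frac12|B|$, and a low-revenue point otherwise. *)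

theory Defs
  imports "HOL-Analysis.Analysis"
begin

definition centroid :: "'a::euclidean_space set \<Rightarrow> 'a" where
  "centroid S = (1 / real (card S)) *\<^sub>R (\<Sum>u\<in>S. u)"

definition cost1 :: "'a::euclidean_space set \<Rightarrow> real" where
  "cost1 S = (\<Sum>u\<in>S. (dist u (centroid S))\<^sup>2)"

definition two_partition :: "'a set \<Rightarrow> 'a set \<Rightarrow> 'a set \<Rightarrow> bool" where
  "two_partition P A B \<longleftrightarrow> A \<noteq> {} \<and> B \<noteq> {} \<and> A \<inter> B = {} \<and> A \<union> B = P"

definition optimal_2means :: "'a::euclidean_space set \<Rightarrow> 'a set \<Rightarrow> 'a set \<Rightarrow> bool" where
  "optimal_2means P A B \<longleftrightarrow> two_partition P A B \<and>
     (\<forall>A' B'. two_partition P A' B' \<longrightarrow> cost1 A + cost1 B \<le> cost1 A' + cost1 B')"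

definition rev :: "'a::euclidean_space set \<Rightarrow> 'a set \<Rightarrow> 'a \<Rightarrow> 'a \<Rightarrow> real" where
  "rev A B i j = (let M = max (dist i (centroid A)) (dist j (centroid B)) in
     if M = 0 then 1 else min (dist i j / M) 1)"

definition HR :: "'a::euclidean_space set \<Rightarrow> 'a set \<Rightarrow> 'a \<Rightarrow> 'a set" where
  "HR A B u = {v\<in>B. rev A B u v \<ge> 1/10}"

definition high_revenue :: "'a::euclidean_space set \<Rightarrow> 'a set \<Rightarrow> 'a \<Rightarrow> bool" where
  "high_revenue A B u \<longleftrightarrow> real (card (HR A B u)) \<ge> real (card B) / 2"

definition low_revenue_points :: "'a::euclidean_space set \<Rightarrow> 'a set \<Rightarrow> 'a set" where
  "low_revenue_points A B = {u\<in>A. \<not> high_revenue A B u}"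

end

theory Submission
  imports Defs
begin

lemma sq_expand:
  fixes a b :: "'a::real_inner"
  shows "(a+b)\<bullet>(a+b) = a\<bullet>a + 2*(a\<bullet>b) + b\<bullet>b"
proof -
  have "(a+b)\<bullet>(a+b) = a\<bullet>a + a\<bullet>b + b\<bullet>a + b\<bullet>b"
    by (simp only: inner_add_left inner_add_right add.assoc)
  then show ?thesis by (simp only: inner_commute[of b a])
qed

lemma centroid_min:
  fixes S :: "'a::euclidean_space set"
  assumes "finite S" "S \<noteq> {}"
  shows "cost1 S \<le> (\<Sum>u\<in>S. (dist u c)\<^sup>2)"
proof -
  define m where "m = centroid S"
  have cS: "card S > 0" using assms by (simp add: card_gt_0_iff)
  have sum0: "(\<Sum>u\<in>S. u - m) = 0"
  proof -
    have "(\<Sum>u\<in>S. u - m) = (\<Sum>u\<in>S. u) - real (card S) *\<^sub>R m"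
      by (simp add: sum_subtractf sum_constant_scaleR)
    also have "real (card S) *\<^sub>R m = (\<Sum>u\<in>S. u)"
      using cS by (simp add: m_def centroid_def)
    finally show ?thesis by simp
  qed
  have each: "(dist u c)\<^sup>2 = (dist u m)\<^sup>2 + 2*((u-m) \<bullet> (m-c)) + (dist m c)\<^sup>2" for u
  proof -
    have "u - c = (u - m) + (m - c)" by simp
    then have "(dist u c)\<^sup>2 = ((u - m) + (m - c)) \<bullet> ((u - m) + (m - c))"
      by (metis dist_norm power2_norm_eq_inner)
    also have "\<dots> = (u-m)\<bullet>(u-m) + 2*((u-m) \<bullet> (m-c)) + (m-c)\<bullet>(m-c)"
      by (rule sq_expand)
    finally show ?thesis by (simp add: dist_norm power2_norm_eq_inner)
  qed
  have "(\<Sum>u\<in>S. (dist u c)\<^sup>2) = (\<Sum>u\<in>S. (dist u m)\<^sup>2) + 2*(\<Sum>u\<in>S. (u-m) \<bullet> (m-c)) + real (card S) * (dist m c)\<^sup>2"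
    by (subst sum.cong[OF refl each]) (simp add: sum.distrib sum_distrib_left)
  also have "(\<Sum>u\<in>S. (u-m) \<bullet> (m-c)) = 0"
    by (simp add: inner_sum_left[symmetric] sum0)
  finally have "(\<Sum>u\<in>S. (dist u c)\<^sup>2) = cost1 S + real (card S) * (dist m c)\<^sup>2"
    by (simp add: cost1_def m_def)
  then show ?thesis by simp
qed

lemma cost1_remove:
  fixes S :: "'a::euclidean_space set"
  assumes "finite S" "v \<in> S" "S - {v} \<noteq> {}"
  shows "cost1 (S - {v}) + (dist v (centroid S))\<^sup>2 \<le> cost1 S"
proof -
  have "cost1 (S - {v}) \<le> (\<Sum>u\<in>S-{v}. (dist u (centroid S))\<^sup>2)"
    using assms by (intro centroid_min) auto
  moreover have "cost1 S = (\<Sum>u\<in>S-{v}. (dist u (centroid S))\<^sup>2) + (dist v (centroid S))\<^sup>2"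
    unfolding cost1_def using assms by (simp add: sum.remove add.commute)
  ultimately show ?thesis by simp
qed

lemma cost1_insert:
  fixes S :: "'a::euclidean_space set"
  assumes "finite S" "v \<notin> S"
  shows "cost1 (insert v S) \<le> cost1 S + (dist v (centroid S))\<^sup>2"
proof -
  have "cost1 (insert v S) \<le> (\<Sum>u\<in>insert v S. (dist u (centroid S))\<^sup>2)"
    using assms by (intro centroid_min) auto
  also have "\<dots> = cost1 S + (dist v (centroid S))\<^sup>2"
    unfolding cost1_def using assms by simp
  finally show ?thesis .
qed

lemma voronoi:
  fixes P A B :: "'a::euclidean_space set"
  assumes "finite P" "optimal_2means P A B" "v \<in> B"
  shows "dist v (centroid B) \<le> dist v (centroid A)"
proof (cases "B - {v} = {}")
  case True
  then have "B = {v}" using assms(3) by auto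
  then have "centroid B = v" by (simp add: centroid_def)
  then show ?thesis by simp
next
  case False
  have tp: "two_partition P A B" and opt: "\<And>A' B'. two_partition P A' B' \<Longrightarrow> cost1 A + cost1 B \<le> cost1 A' + cost1 B'"
    using assms(2) unfolding optimal_2means_def by auto
  have fA: "finite A" and fB: "finite B" using tp assms(1) unfolding two_partition_def
    by (auto intro: finite_subset)
  have vA: "v \<notin> A" using tp assms(3) unfolding two_partition_def by auto
  have "two_partition P (insert v A) (B - {v})"
    using tp assms(3) False unfolding two_partition_def by auto
  then have "cost1 A + cost1 B \<le> cost1 (insert v A) + cost1 (B - {v})" by (rule opt)
  moreover have "cost1 (insert v A) \<le> cost1 A + (dist v (centroid A))\<^sup>2"
    using fA vA by (rule cost1_insert)
  moreover have "cost1 (B - {v}) + (dist v (centroid B))\<^sup>2 \<le> cost1 B"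
    using fB assms(3) False by (rule cost1_remove)
  ultimately have "(dist v (centroid B))\<^sup>2 \<le> (dist v (centroid A))\<^sup>2" by linarith
  then show ?thesis by (simp add: power_mono_iff)
qed

theorem mainTheorem7:
  fixes P A B :: "'a::euclidean_space set" and x :: 'a
  assumes "finite P"
    and "optimal_2means P A B"
    and "low_revenue_points A B \<noteq> {}"
    and "x \<in> low_revenue_points A B"
    and "\<forall>u\<in>low_revenue_points A B. dist u (centroid A) \<le> dist x (centroid A)"
  shows "\<forall>u\<in>low_revenue_points A B. dist u (centroid B) \<le> 11/9 * dist x (centroid A)"
proof
  fix u assume u: "u \<in> low_revenue_points A B"
  have tp: "two_partition P A B" using assms(2) unfolding optimal_2means_def by auto
  have fB: "finite B" and Bne: "B \<noteq> {}" using tp assms(1) unfolding two_partition_def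
    by (auto intro: finite_subset)
  have low: "real (card (HR A B u)) < real (card B) / 2"
    using u unfolding low_revenue_points_def high_revenue_def by auto
  have "card B > 0" using fB Bne by (simp add: card_gt_0_iff)
  then have "card (HR A B u) < card B" using low by linarith
  moreover have "HR A B u \<subseteq> B" unfolding HR_def by auto
  ultimately obtain v where vB: "v \<in> B" and vn: "v \<notin> HR A B u"
    by (metis subsetI subset_antisym less_irrefl)
  define M where "M = max (dist u (centroid A)) (dist v (centroid B))"
  have rv: "rev A B u v < 1/10" using vn vB unfolding HR_def by auto
  have M0: "M \<noteq> 0" using rv unfolding rev_def M_def Let_def by (auto split: if_splits)
  have Mpos: "M > 0" using M0 unfolding M_def by (smt (verit) zero_le_dist)
  have "min (dist u v / M) 1 < 1/10" using rv M0 unfolding rev_def M_def[symmetric] Let_def by simp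
  then have "dist u v / M < 1/10" by linarith
  then have duv: "dist u v < M / 10" using Mpos by (simp add: divide_less_eq)
  have vor: "dist v (centroid B) \<le> dist v (centroid A)" using assms(1,2) vB by (rule voronoi)
  have tri1: "dist v (centroid A) \<le> dist u v + dist u (centroid A)"
    by (metis dist_commute dist_triangle)
  have tri2: "dist u (centroid B) \<le> dist u v + dist v (centroid B)"
    by (rule dist_triangle)
  have ux: "dist u (centroid A) \<le> dist x (centroid A)" using assms(5) u by auto
  show "dist u (centroid B) \<le> 11/9 * dist x (centroid A)"
  proof (cases "dist u (centroid A) \<ge> dist v (centroid B)")
    case True
    then have "M = dist u (centroid A)" unfolding M_def by simp
    then show ?thesis using duv tri2 True ux zero_le_dist[of u "centroid A"] by linarith
  next
    case False
    then have "M = dist v (centroid B)" unfolding M_def by simp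
    then show ?thesis using duv tri2 tri1 vor ux by linarith
  qed
qed

end
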